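(* There is an absolute constant $c>0$ such that: given a 2D SLP $\mathcal G$ deriving a 2D string $T\in\Sigma^{N\times M}$ with $N\le M$, one can construct a 1D SLP of size at most $c\cdot|\mathcal G|\cdot N$ deriving the string $T[1]\cdot T[2]\cdots T[N]$ of length $NM$ (the concatenation of all rows of $T$, from top to bottom).
   Context: Let $\Sigma$ be a fixed finite alphabet. A 2D string of size $n\times m$ is an $n\times m$ array of characters of $\Sigma$; $\mathrm{h}(S)=n$ is its height and $\mathrm{w}(S)=m$ its width; $S[i]$ denotes its $i$-th row (a string of length $m$). For 2D strings $A,B$ with $\mathrm{h}(A)=\mathrm{h}(B)$, $A \oplus_{\mathrm h} B$ denotes their horizontal concatenation ($B$ placed to the right of $A$); for $\mathrm{w}(A)=\mathrm{w}(B)$, $A\oplus_{\mathrm v} B$ denotes their vertical concatenation ($B$ placed below $A$). A 2D SLP is a triple $\mathcal{G}=(\mathcal{V},\mathcal{S},\rho)$ where $\mathcal{V}$ is a finite set of nonterminals (disjoint from $\Sigma$), each $X\in\mathcal V$ having a dimension $(\mathrm h(X),\mathrm w(X))$, $\mathcal S\in\mathcal V$ is the starting nonterminal, and $\rho$ assigns to each $X$ a right-hand side which is either a character $\sigma\in\Sigma$ (then $\mathrm h(X)=\mathrm w(X)=1$), or $Y\oplus_{\mathrm h} Z$ with $Y,Z\in\mathcal V$, $\mathrm h(X)=\mathrm h(Y)=\mathrm h(Z)$, $\mathrm w(X)=\mathrm w(Y)+\mathrm w(Z)$, or $Y\oplus_{\mathrm v}Z$ with $Y,Z\in\mathcal V$,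 $\mathrm w(X)=\mathrm w(Y)=\mathrm w(Z)$, $\mathrm h(X)=\mathrm h(Y)+\mathrm h(Z)$; the relation "$Y$ occurs in the right-hand side of $X$" must be acyclic. The expansion $\exp(X)$ is defined recursively, and $\exp(\mathcal G)=\exp(\mathcal S)$ is the derived string. The size $|\mathcal G|$ is the total number of symbols (nonterminals and characters) on all right-hand sides. A 1D SLP is a 2D SLP using only character and horizontal-concatenation productions; it derives a $1\times n$ string, identified with an ordinary string of length $n$. *)

theory Defs
  imports Complex_Main
begin

datatype ('n, 'a) rhs = Chr 'a | HCat 'n 'n | VCat 'n 'n

record ('n, 'a) slp2 =
  nts   :: "'n set"
  start :: 'n
  rules :: "'n \<Rightarrow> ('n, 'a) rhs"

fun rhs_nts :: "('n, 'a) rhs \<Rightarrow> 'n set" where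
  "rhs_nts (Chr c) = {}"
| "rhs_nts (HCat Y Z) = {Y, Z}"
| "rhs_nts (VCat Y Z) = {Y, Z}"

fun rhs_size :: "('n, 'a) rhs \<Rightarrow> nat" where
  "rhs_size (Chr c) = 1"
| "rhs_size (HCat Y Z) = 2"
| "rhs_size (VCat Y Z) = 2"

definition slp_size :: "('n, 'a, 'z) slp2_scheme \<Rightarrow> nat" where
  "slp_size G = (\<Sum>X\<in>nts G. rhs_size (rules G X))"

fun dims_ok :: "('n \<Rightarrow> nat) \<Rightarrow> ('n \<Rightarrow> nat) \<Rightarrow> 'n \<Rightarrow> ('n, 'a) rhs \<Rightarrow> bool" where
  "dims_ok h w X (Chr c) = (h X = 1 \<and> w X = 1)"
| "dims_ok h w X (HCat Y Z) = (h X = h Y \<and> h X = h Z \<and> w X = w Y + w Z)"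
| "dims_ok h w X (VCat Y Z) = (w X = w Y \<and> w X = w Z \<and> h X = h Y + h Z)"

definition is_slp2 :: "('n, 'a, 'z) slp2_scheme \<Rightarrow> bool" where
  "is_slp2 G \<longleftrightarrow> finite (nts G) \<and> start G \<in> nts G
     \<and> (\<forall>X\<in>nts G. rhs_nts (rules G X) \<subseteq> nts G)
     \<and> (\<exists>h w. \<forall>X\<in>nts G. dims_ok h w X (rules G X))
     \<and> acyclic {(X, Y). X \<in> nts G \<and> Y \<in> rhs_nts (rules G X)}"

definition is_slp1 :: "('n, 'a, 'z) slp2_scheme \<Rightarrow> bool" where
  "is_slp1 G \<longleftrightarrow> is_slp2 G \<and> (\<forall>X\<in>nts G. \<forall>Y Z. rules G X \<noteq> VCat Y Z)"

text \<open>2D strings are lists of rows. expands G X T means exp(X) = T.\<close>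
inductive expands :: "('n, 'a, 'z) slp2_scheme \<Rightarrow> 'n \<Rightarrow> 'a list list \<Rightarrow> bool"
  for G where
  chr:  "X \<in> nts G \<Longrightarrow> rules G X = Chr c \<Longrightarrow> expands G X [[c]]"
| hcat: "X \<in> nts G \<Longrightarrow> rules G X = HCat Y Z \<Longrightarrow> expands G Y A \<Longrightarrow> expands G Z B
          \<Longrightarrow> length A = length B \<Longrightarrow> expands G X (map (\<lambda>(r, s). r @ s) (zip A B))"
| vcat: "X \<in> nts G \<Longrightarrow> rules G X = VCat Y Z \<Longrightarrow> expands G Y A \<Longrightarrow> expands G Z B
          \<Longrightarrow> expands G X (A @ B)"

definition derives :: "('n, 'a, 'z) slp2_scheme \<Rightarrow> 'a list list \<Rightarrow> bool" where
  "derives G T \<longleftrightarrow> expands G (start G) T"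

end

theory Submission
  imports Defs "HOL-Library.Countable"
begin

lemma exp_dims:
  assumes "\<forall>X\<in>nts G. dims_ok h w X (rules G X)"
  shows "expands G X A \<Longrightarrow> length A = h X \<and> (\<forall>r\<in>set A. length r = w X)"
proof (induction rule: expands.induct)
  case (chr X c)
  have "h X = 1 \<and> w X = 1" using assms chr by (metis dims_ok.simps(1))
  then show ?case by simp
next
  case (hcat X Y Z A B)
  have d: "h X = h Y \<and> h X = h Z \<and> w X = w Y + w Z" using assms hcat by (metis dims_ok.simps(2))
  show ?case
  proof
    show "length (map (\<lambda>(r, s). r @ s) (zip A B)) = h X" using hcat d by simp
    show "\<forall>r\<in>set (map (\<lambda>(r, s). r @ s) (zip A B)). length r = w X"
    proof
      fix x assume "x \<in> set (map (\<lambda>(r, s). r @ s) (zip A B))"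
      then obtain r s where rs: "(r, s) \<in> set (zip A B)" "x = r @ s" by auto
      have "r \<in> set A" "s \<in> set B" using set_zip_leftD[OF rs(1)] set_zip_rightD[OF rs(1)] .
      then show "length x = w X" using hcat.IH d rs(2) by simp
    qed
  qed
next
  case (vcat X Y Z A B)
  have d: "w X = w Y \<and> w X = w Z \<and> h X = h Y + h Z" using assms vcat by (metis dims_ok.simps(3))
  then show ?case using vcat by auto
qed

lemma exp_nonempty:
  "expands G X A \<Longrightarrow> A \<noteq> [] \<and> (\<forall>r\<in>set A. r \<noteq> [])"
proof (induction rule: expands.induct)
  case (hcat X Y Z A B)
  then show ?case by (auto dest: set_zip_leftD simp: zip_eq_Nil_iff)
qed auto

lemma exp_det:
  "expands G X A \<Longrightarrow> expands G X B \<Longrightarrow> A = B"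
proof (induction arbitrary: B rule: expands.induct)
  case (chr X c)
  from chr.prems show ?case
  proof cases
    case (chr c')
    then show ?thesis using \<open>rules G X = Chr c\<close> by simp
  next
    case (hcat Y Z A B)
    then show ?thesis using \<open>rules G X = Chr c\<close> by simp
  next
    case (vcat Y Z A B)
    then show ?thesis using \<open>rules G X = Chr c\<close> by simp
  qed
next
  case (hcat X Y Z A B B0)
  from hcat.prems show ?case
  proof cases
    case (chr c')
    then show ?thesis using \<open>rules G X = HCat Y Z\<close> by simp
  next
    case (hcat Y' Z' A' B')
    have "Y' = Y" "Z' = Z" using hcat \<open>rules G X = HCat Y Z\<close> by simp_all
    then have "A = A'" "B = B'" using hcat.IH hcat by simp_all
    then show ?thesis using hcat by simp
  next
    case (vcat Y' Z' A' B')
    then show ?thesis using \<open>rules G X = HCat Y Z\<close> by simp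
  qed
next
  case (vcat X Y Z A B B0)
  from vcat.prems show ?case
  proof cases
    case (chr c')
    then show ?thesis using \<open>rules G X = VCat Y Z\<close> by simp
  next
    case (hcat Y' Z' A' B')
    then show ?thesis using \<open>rules G X = VCat Y Z\<close> by simp
  next
    case (vcat Y' Z' A' B')
    have "Y' = Y" "Z' = Z" using vcat \<open>rules G X = VCat Y Z\<close> by simp_all
    then have "A = A'" "B = B'" using vcat.IH vcat by simp_all
    then show ?thesis using vcat by simp
  qed
qed

definition edges :: "('n, 'a, 'z) slp2_scheme \<Rightarrow> ('n \<times> 'n) set" where
  "edges G = {(X, Y). X \<in> nts G \<and> Y \<in> rhs_nts (rules G X)}"

lemma wf_edges:
  assumes "is_slp2 G" shows "wf ((edges G)\<inverse>)"
proof -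
  have "edges G \<subseteq> nts G \<times> nts G" using assms unfolding edges_def is_slp2_def by auto
  hence "finite (edges G)" using assms unfolding is_slp2_def by (meson finite_SigmaI finite_subset)
  moreover have "acyclic (edges G)" using assms unfolding is_slp2_def edges_def by simp
  ultimately show ?thesis by (rule finite_acyclic_wf_converse)
qed

lemma exp_exists:
  assumes G: "is_slp2 G" and hw: "\<forall>X\<in>nts G. dims_ok h w X (rules G X)"
  shows "X \<in> nts G \<Longrightarrow> \<exists>A. expands G X A"
  using wf_edges[OF G]
proof (induction X rule: wf_induct_rule)
  case (less X)
  have sub: "rhs_nts (rules G X) \<subseteq> nts G" using G less.prems unfolding is_slp2_def by auto
  have IH: "\<And>Y. Y \<in> rhs_nts (rules G X) \<Longrightarrow> \<exists>A. expands G Y A"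
    using less sub unfolding edges_def by auto
  show ?case
  proof (cases "rules G X")
    case (Chr c)
    show ?thesis using expands.chr[OF less.prems Chr] by (rule exI)
  next
    case (HCat Y Z)
    obtain A where A: "expands G Y A" using IH[of Y] HCat by auto
    obtain B where B: "expands G Z B" using IH[of Z] HCat by auto
    have "length A = h Y" "length B = h Z" using exp_dims[OF hw A] exp_dims[OF hw B] by auto
    moreover have "h X = h Y \<and> h X = h Z" using hw less.prems HCat by fastforce
    ultimately have "length A = length B" by simp
    then show ?thesis using expands.hcat[OF less.prems HCat A B] by (intro exI)
  next
    case (VCat Y Z)
    obtain A where A: "expands G Y A" using IH[of Y] VCat by auto
    obtain B where B: "expands G Z B" using IH[of Z] VCat by auto
    show ?thesis using expands.vcat[OF less.prems VCat A B] by (rule exI)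
  qed
qed

definition split_rule :: "'a::countable list set \<Rightarrow> nat \<Rightarrow> (nat, 'a) rhs" where
  "split_rule S n = (let s = (from_nat n :: 'a list) in if length s = 1 then Chr (hd s) else
     (let p = (SOME p. fst p \<in> S \<and> snd p \<in> S \<and> fst p \<noteq> [] \<and> snd p \<noteq> [] \<and> s = fst p @ snd p)
      in HCat (to_nat (fst p)) (to_nat (snd p))))"

lemma split_rule_props:
  fixes S :: "'a::countable list set"
  assumes ne: "\<forall>s\<in>S. s \<noteq> []"
    and cl: "\<forall>s\<in>S. 2 \<le> length s \<longrightarrow> (\<exists>a b. a\<in>S \<and> b\<in>S \<and> a\<noteq>[] \<and> b\<noteq>[] \<and> s = a@b)"
    and s: "s \<in> S"
  shows "(length s = 1 \<and> split_rule S (to_nat s) = Chr (hd s)) \<or>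
    (\<exists>a b. a\<in>S \<and> b\<in>S \<and> a\<noteq>[] \<and> b\<noteq>[] \<and> s = a@b \<and> split_rule S (to_nat s) = HCat (to_nat a) (to_nat b))"
proof (cases "length s = 1")
  case True
  then show ?thesis by (simp add: split_rule_def)
next
  case False
  have "length s \<noteq> 0" using ne s by auto
  with False have "2 \<le> length s" by linarith
  with cl s obtain a b where "a\<in>S \<and> b\<in>S \<and> a\<noteq>[] \<and> b\<noteq>[] \<and> s = a@b" by blast
  hence ex: "\<exists>p. fst p \<in> S \<and> snd p \<in> S \<and> fst p \<noteq> [] \<and> snd p \<noteq> [] \<and> s = fst p @ snd p"
    by (intro exI[of _ "(a,b)"]) simp
  define p where "p = (SOME p. fst p \<in> S \<and> snd p \<in> S \<and> fst p \<noteq> [] \<and> snd p \<noteq> [] \<and> s = fst p @ snd p)"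
  have P: "fst p \<in> S \<and> snd p \<in> S \<and> fst p \<noteq> [] \<and> snd p \<noteq> [] \<and> s = fst p @ snd p"
    unfolding p_def by (rule someI_ex[OF ex])
  have "split_rule S (to_nat s) = HCat (to_nat (fst p)) (to_nat (snd p))"
    using False by (simp add: split_rule_def p_def Let_def)
  then show ?thesis using P by blast
qed

lemma generic_slp1:
  fixes S :: "'a::countable list set"
  assumes fin: "finite S" and ne: "\<forall>s\<in>S. s \<noteq> []"
    and cl: "\<forall>s\<in>S. 2 \<le> length s \<longrightarrow> (\<exists>a b. a\<in>S \<and> b\<in>S \<and> a\<noteq>[] \<and> b\<noteq>[] \<and> s = a@b)"
    and t: "t \<in> S"
  shows "\<exists>G' :: (nat, 'a) slp2. is_slp1 G' \<and> derives G' [t] \<and> slp_size G' \<le> 2 * card S"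
proof -
  define G' :: "(nat, 'a) slp2" where "G' = \<lparr>nts = to_nat ` S, start = to_nat t, rules = split_rule S\<rparr>"
  note P = split_rule_props[OF ne cl]
  have rn: "rhs_nts (rules G' X) \<subseteq> nts G'" if "X \<in> nts G'" for X
    using that P unfolding G'_def by fastforce
  have dims: "\<forall>X\<in>nts G'. dims_ok (\<lambda>_. 1) (\<lambda>n. length (from_nat n :: 'a list)) X (rules G' X)"
  proof
    fix X assume "X \<in> nts G'"
    then obtain s where s: "s \<in> S" "X = to_nat s" unfolding G'_def by auto
    from P[OF s(1)] show "dims_ok (\<lambda>_. 1) (\<lambda>n. length (from_nat n :: 'a list)) X (rules G' X)"
      using s unfolding G'_def by auto
  qed
  have "(edges G')\<inverse> \<subseteq> measure (\<lambda>n. length (from_nat n :: 'a list))"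
  proof
    fix p assume "p \<in> (edges G')\<inverse>"
    then obtain X Y where p: "p = (Y, X)" "X \<in> nts G'" "Y \<in> rhs_nts (rules G' X)"
      unfolding edges_def by auto
    then obtain s where s: "s \<in> S" "X = to_nat s" unfolding G'_def by auto
    from P[OF s(1)] p s show "p \<in> measure (\<lambda>n. length (from_nat n :: 'a list))"
      unfolding G'_def by auto
  qed
  hence "wf ((edges G')\<inverse>)" by (rule wf_subset[OF wf_measure])
  hence acyc: "acyclic (edges G')" using wf_acyclic acyclic_converse by blast
  have noV: "\<forall>X\<in>nts G'. \<forall>Y Z. rules G' X \<noteq> VCat Y Z"
  proof (intro ballI allI)
    fix X Y Z assume "X \<in> nts G'"
    then obtain s where s: "s \<in> S" "X = to_nat s" unfolding G'_def by auto
    from P[OF s(1)] s show "rules G' X \<noteq> VCat Y Z" unfolding G'_def by auto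
  qed
  have slp: "is_slp1 G'"
    unfolding is_slp1_def is_slp2_def
    using rn dims acyc noV fin t unfolding edges_def by (auto simp: G'_def)
  have ex: "s \<in> S \<Longrightarrow> expands G' (to_nat s) [s]" for s
  proof (induction "length s" arbitrary: s rule: less_induct)
    case less
    have X: "to_nat s \<in> nts G'" using less.prems by (simp add: G'_def)
    from P[OF less.prems] show ?case
    proof
      assume "length s = 1 \<and> split_rule S (to_nat s) = Chr (hd s)"
      then have "s = [hd s]" "rules G' (to_nat s) = Chr (hd s)"
        by (auto simp: G'_def length_Suc_conv)
      then show ?thesis using expands.chr[OF X] by metis
    next
      assume "\<exists>a b. a\<in>S \<and> b\<in>S \<and> a\<noteq>[] \<and> b\<noteq>[] \<and> s = a@b \<and> split_rule S (to_nat s) = HCat (to_nat a) (to_nat b)"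
      then obtain a b where ab: "a\<in>S" "b\<in>S" "a\<noteq>[]" "b\<noteq>[]" "s = a@b"
        "rules G' (to_nat s) = HCat (to_nat a) (to_nat b)" by (auto simp: G'_def)
      have ea: "expands G' (to_nat a) [a]" using less.hyps ab by simp
      have eb: "expands G' (to_nat b) [b]" using less.hyps ab by simp
      have "expands G' (to_nat s) (map (\<lambda>(r, s). r @ s) (zip [a] [b]))"
        using expands.hcat[OF X ab(6) ea eb] by simp
      then show ?thesis using ab by simp
    qed
  qed
  have der: "derives G' [t]" unfolding derives_def using ex[OF t] by (simp add: G'_def)
  have "slp_size G' = (\<Sum>X\<in>to_nat ` S. rhs_size (split_rule S X))" by (simp add: slp_size_def G'_def)
  also have "\<dots> \<le> of_nat (card (to_nat ` S)) * 2"
  proof (rule sum_bounded_above)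
    fix X assume "X \<in> to_nat ` S"
    then obtain s where s: "s \<in> S" "X = to_nat s" by auto
    from P[OF s(1)] s show "rhs_size (split_rule S X) \<le> 2" by auto
  qed
  also have "\<dots> \<le> 2 * card S" using card_image_le[OF fin, of to_nat] by simp
  finally show ?thesis using slp der by blast
qed

lemma E_exp:
  assumes G: "is_slp2 G" and hw: "\<forall>X\<in>nts G. dims_ok h w X (rules G X)" and X: "X \<in> nts G"
  shows "expands G X (THE A. expands G X A)"
proof -
  obtain A where A: "expands G X A" using exp_exists[OF G hw X] by blast
  show ?thesis
  proof (rule theI[of "expands G X" A])
    show "expands G X A" by (rule A)
    show "\<And>x. expands G X x \<Longrightarrow> x = A" using exp_det[OF _ A] by simp
  qed
qed

lemma rows_closure:
  fixes G :: "('n, 'a, 'z) slp2_scheme"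
  assumes G: "is_slp2 G" and hw: "\<forall>X\<in>nts G. dims_ok h w X (rules G X)"
    and E_def: "E = (\<lambda>X. THE A. expands G X A)"
    and R_def: "R = {E X ! i | X i. X \<in> nts G \<and> i < h X \<and> i < N}"
  shows "X \<in> nts G \<Longrightarrow> i < h X \<Longrightarrow> i < N \<Longrightarrow> 2 \<le> length (E X ! i) \<Longrightarrow>
    \<exists>a b. a\<in>R \<and> b\<in>R \<and> a\<noteq>[] \<and> b\<noteq>[] \<and> E X ! i = a@b"
  using wf_edges[OF G]
proof (induction X arbitrary: i rule: wf_induct_rule)
  case (less X)
  have EX: "expands G Y (E Y)" if "Y \<in> nts G" for Y
    unfolding E_def using E_exp[OF G hw that] .
  have dimE: "length (E Y) = h Y \<and> (\<forall>r\<in>set (E Y). r \<noteq> [])" if "Y \<in> nts G" for Y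
  proof -
    have "length (E Y) = h Y" using exp_dims[OF hw EX[OF that]] by (rule conjunct1)
    moreover have "\<forall>r\<in>set (E Y). r \<noteq> []" using exp_nonempty[OF EX[OF that]] by (rule conjunct2)
    ultimately show ?thesis by (rule conjI)
  qed
  have Xn: "X \<in> nts G" by (rule less.prems(1))
  have inR: "E X' ! i' \<in> R" if "X' \<in> nts G" "i' < h X'" "i' < N" for X' i'
    unfolding R_def using that by blast
  have sub: "rhs_nts (rules G X) \<subseteq> nts G" using G Xn unfolding is_slp2_def by blast
  show ?case
  proof (cases "rules G X")
    case (Chr c)
    have "E X = [[c]]" using exp_det[OF EX[OF Xn] expands.chr[OF Xn Chr]] .
    moreover have "i = 0" using less.prems(2) hw Xn Chr by fastforce
    ultimately have "length (E X ! i) = 1" by simp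
    then show ?thesis using less.prems(4) by simp
  next
    case (HCat Y Z)
    have YZ: "Y \<in> nts G" "Z \<in> nts G" using sub HCat by auto
    have d: "h X = h Y \<and> h X = h Z" using hw Xn HCat by fastforce
    have lY: "length (E Y) = h Y" and lZ: "length (E Z) = h Z" using dimE[OF YZ(1)] dimE[OF YZ(2)] by auto
    have len: "length (E Y) = length (E Z)" using lY lZ d by simp
    have "E X = map (\<lambda>(r, s). r @ s) (zip (E Y) (E Z))"
      using exp_det[OF EX[OF Xn] expands.hcat[OF Xn HCat EX[OF YZ(1)] EX[OF YZ(2)] len]] .
    moreover have i: "i < length (E Y)" "i < length (E Z)" using lY lZ d less.prems(2) by auto
    ultimately have eq: "E X ! i = E Y ! i @ E Z ! i" by simp
    have "E Y ! i \<in> R" using inR[OF YZ(1)] d less.prems(2,3) by simp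
    moreover have "E Z ! i \<in> R" using inR[OF YZ(2)] d less.prems(2,3) by simp
    moreover have "E Y ! i \<noteq> []" using dimE[OF YZ(1)] nth_mem[OF i(1)] by blast
    moreover have "E Z ! i \<noteq> []" using dimE[OF YZ(2)] nth_mem[OF i(2)] by blast
    ultimately show ?thesis using eq by blast
  next
    case (VCat Y Z)
    have YZ: "Y \<in> nts G" "Z \<in> nts G" using sub VCat by auto
    have e: "(Y, X) \<in> (edges G)\<inverse>" "(Z, X) \<in> (edges G)\<inverse>" using Xn VCat unfolding edges_def by auto
    have d: "h X = h Y + h Z" using hw Xn VCat by fastforce
    have lY: "length (E Y) = h Y" using dimE[OF YZ(1)] by auto
    have EXe: "E X = E Y @ E Z"
      using exp_det[OF EX[OF Xn] expands.vcat[OF Xn VCat EX[OF YZ(1)] EX[OF YZ(2)]]] .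
    show ?thesis
    proof (cases "i < h Y")
      case True
      hence eq: "E X ! i = E Y ! i" using EXe lY by (simp add: nth_append)
      have "2 \<le> length (E Y ! i)" using less.prems(4) eq by simp
      then show ?thesis using less.IH[OF e(1) YZ(1) True less.prems(3)] eq by simp
    next
      case False
      hence eq: "E X ! i = E Z ! (i - h Y)" using EXe lY by (simp add: nth_append)
      have a: "i - h Y < h Z" "i - h Y < N" using False d less.prems(2,3) by auto
      have "2 \<le> length (E Z ! (i - h Y))" using less.prems(4) eq by simp
      then show ?thesis using less.IH[OF e(2) YZ(2) a] eq by simp
    qed
  qed
qed

lemma rhs_size_ge1: "1 \<le> rhs_size r" by (cases r) auto
lemma rhs_size_le2: "rhs_size r \<le> 2" by (cases r) auto

theorem mainTheorem3:
  "\<exists>c::real. c > 0 \<and>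
     (\<forall>(G :: (nat, 'a::finite) slp2) (T :: 'a list list) N M.
        is_slp2 G \<and> derives G T \<and> length T = N \<and> (\<forall>r\<in>set T. length r = M) \<and> N \<le> M
        \<longrightarrow> (\<exists>G' :: (nat, 'a) slp2. is_slp1 G' \<and> derives G' [concat T]
               \<and> real (slp_size G') \<le> c * real (slp_size G) * real N))"
proof (intro exI[of _ 4] conjI allI impI)
  fix G :: "(nat, 'a::finite) slp2" and T :: "'a list list" and N M :: nat
  assume H: "is_slp2 G \<and> derives G T \<and> length T = N \<and> (\<forall>r\<in>set T. length r = M) \<and> N \<le> M"
  hence G: "is_slp2 G" and D: "expands G (start G) T" and TN: "length T = N"
    unfolding derives_def by auto
  obtain h w where hw: "\<forall>X\<in>nts G. dims_ok h w X (rules G X)" using G unfolding is_slp2_def by blast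
  define E where "E = (\<lambda>X. THE A. expands G X A)"
  define R where "R = {E X ! i | X i. X \<in> nts G \<and> i < h X \<and> i < N}"
  define C where "C = (\<lambda>k. concat (take k T)) ` {1..N}"
  define S where "S = R \<union> C"
  have sG: "start G \<in> nts G" and finG: "finite (nts G)" using G unfolding is_slp2_def by auto
  have EX: "expands G Y (E Y)" if "Y \<in> nts G" for Y
    unfolding E_def using E_exp[OF G hw that] .
  have dimE: "length (E Y) = h Y \<and> (\<forall>r\<in>set (E Y). r \<noteq> [])" if "Y \<in> nts G" for Y
  proof -
    have "length (E Y) = h Y" using exp_dims[OF hw EX[OF that]] by (rule conjunct1)
    moreover have "\<forall>r\<in>set (E Y). r \<noteq> []" using exp_nonempty[OF EX[OF that]] by (rule conjunct2)
    ultimately show ?thesis by (rule conjI)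
  qed
  have inR: "E X' ! i' \<in> R" if "X' \<in> nts G" "i' < h X'" "i' < N" for X' i'
    unfolding R_def using that by blast
  have ES: "E (start G) = T" using exp_det[OF EX[OF sG] D] .
  have hS: "h (start G) = N" using dimE[OF sG] ES TN by simp
  have Tne: "T \<noteq> []" and Trow: "\<forall>r\<in>set T. r \<noteq> []" using exp_nonempty[OF D] by auto
  have N1: "1 \<le> N" using Tne TN by (cases T) auto
  have TR: "T ! k \<in> R" if "k < N" for k using inR[OF sG, of k] hS ES that by simp
  have Rsub: "R \<subseteq> (\<lambda>(X, i). E X ! i) ` (nts G \<times> {..<N})"
  proof
    fix s assume "s \<in> R"
    then obtain X i where Xi: "s = E X ! i" "X \<in> nts G" "i < h X" "i < N" unfolding R_def by blast
    show "s \<in> (\<lambda>(X, i). E X ! i) ` (nts G \<times> {..<N})"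
      by (rule image_eqI[of _ _ "(X, i)"]) (use Xi in auto)
  qed
  have finR: "finite R" using Rsub finG by (meson finite_SigmaI finite_imageI finite_lessThan finite_subset)
  have cardR: "card R \<le> card (nts G) * N"
  proof -
    have "card R \<le> card ((\<lambda>(X, i). E X ! i) ` (nts G \<times> {..<N}))"
      using Rsub finG by (intro card_mono) auto
    also have "\<dots> \<le> card (nts G \<times> {..<N})" by (rule card_image_le) (use finG in auto)
    finally show ?thesis by (simp add: card_cartesian_product)
  qed
  have cardC: "card C \<le> N" unfolding C_def using card_image_le[of "{1..N}"] by fastforce
  have finC: "finite C" unfolding C_def by simp
  have finS: "finite S" unfolding S_def using finR finC by (rule finite_UnI)
  have neR: "\<forall>s\<in>R. s \<noteq> []"
  proof
    fix s assume "s \<in> R"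
    then obtain X i where Xi: "s = E X ! i" "X \<in> nts G" "i < h X" "i < N" unfolding R_def by blast
    have "i < length (E X)" using dimE[OF Xi(2)] Xi(3) by simp
    hence "E X ! i \<in> set (E X)" by (rule nth_mem)
    moreover have "\<forall>r\<in>set (E X). r \<noteq> []" using dimE[OF Xi(2)] by (rule conjunct2)
    ultimately show "s \<noteq> []" using Xi(1) by simp
  qed
  have concat_ne: "concat (take k T) \<noteq> []" if k1: "1 \<le> k" for k
  proof -
    obtain r rs where T: "T = r # rs" using Tne by (cases T) auto
    obtain k' where k: "k = Suc k'" using k1 by (cases k) auto
    show ?thesis using Trow T k by auto
  qed
  have neC: "\<forall>s\<in>C. s \<noteq> []"
  proof
    fix s assume "s \<in> C"
    then obtain k where "k \<in> {1..N}" "s = concat (take k T)" unfolding C_def by blast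
    then show "s \<noteq> []" using concat_ne[of k] by simp
  qed
  have neS: "\<forall>s\<in>S. s \<noteq> []" unfolding S_def using neR neC by blast
  have clR: "\<forall>s\<in>R. 2 \<le> length s \<longrightarrow> (\<exists>a b. a\<in>R \<and> b\<in>R \<and> a\<noteq>[] \<and> b\<noteq>[] \<and> s = a@b)"
  proof (intro ballI impI)
    fix s assume "s \<in> R" and l: "2 \<le> length s"
    then obtain X i where Xi: "s = E X ! i" "X \<in> nts G" "i < h X" "i < N" unfolding R_def by blast
    show "\<exists>a b. a\<in>R \<and> b\<in>R \<and> a\<noteq>[] \<and> b\<noteq>[] \<and> s = a@b"
      using rows_closure[OF G hw E_def R_def Xi(2,3,4)] l Xi(1) by simp
  qed
  have clS: "\<forall>s\<in>S. 2 \<le> length s \<longrightarrow> (\<exists>a b. a\<in>S \<and> b\<in>S \<and> a\<noteq>[] \<and> b\<noteq>[] \<and> s = a@b)"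
  proof (intro ballI impI)
    fix s assume s: "s \<in> S" and l: "2 \<le> length s"
    show "\<exists>a b. a\<in>S \<and> b\<in>S \<and> a\<noteq>[] \<and> b\<noteq>[] \<and> s = a@b"
    proof (cases "s \<in> R")
      case True
      then obtain a b where "a\<in>R" "b\<in>R" "a\<noteq>[]" "b\<noteq>[]" "s = a@b" using clR l by blast
      then show ?thesis unfolding S_def by blast
    next
      case False
      then obtain k where k: "k \<in> {1..N}" "s = concat (take k T)" using s unfolding S_def C_def by auto
      show ?thesis
      proof (cases "k = 1")
        case True
        hence "s = T ! 0" using k Tne by (cases T) auto
        hence "s \<in> R" using TR N1 by simp
        then show ?thesis using False by simp
      next
        case False
        then obtain j where j: "k = Suc j" "1 \<le> j" using k by (cases k) auto
        have jN: "j < N" using j k by auto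
        have "take k T = take j T @ [T ! j]" using j jN TN by (simp add: take_Suc_conv_app_nth)
        hence eq: "s = concat (take j T) @ T ! j" using k by simp
        have "concat (take j T) \<in> S" unfolding S_def C_def using j jN by auto
        moreover have "T ! j \<in> S" unfolding S_def using TR jN by auto
        moreover have "T ! j \<noteq> []" using Trow jN TN nth_mem by blast
        ultimately show ?thesis using eq concat_ne j by blast
      qed
    qed
  qed
  have tS: "concat T \<in> S" unfolding S_def C_def using N1 TN by force
  obtain G' :: "(nat, 'a) slp2" where G': "is_slp1 G'" "derives G' [concat T]" "slp_size G' \<le> 2 * card S"
    using generic_slp1[OF finS neS clS tS] by blast
  have cn: "card (nts G) \<le> slp_size G"
  proof -
    have "card (nts G) = (\<Sum>X\<in>nts G. (1::nat))" by simp
    also have "\<dots> \<le> slp_size G" unfolding slp_size_def by (rule sum_mono) (rule rhs_size_ge1)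
    finally show ?thesis .
  qed
  have "card (nts G) \<noteq> 0" using sG finG by auto
  hence cn1: "1 \<le> card (nts G)" by simp
  have "card S \<le> card R + card C" unfolding S_def by (rule card_Un_le)
  hence a: "card S \<le> card (nts G) * N + N" using cardR cardC by linarith
  have b: "card (nts G) * N \<le> slp_size G * N" using cn by simp
  have c: "N \<le> slp_size G * N" using cn cn1 by simp
  have e: "4 * slp_size G * N = 2 * (slp_size G * N) + 2 * (slp_size G * N)" by simp
  have "slp_size G' \<le> 4 * slp_size G * N" using G'(3) a b c e by linarith
  hence "real (slp_size G') \<le> real (4 * slp_size G * N)" by (rule of_nat_mono)
  hence "real (slp_size G') \<le> 4 * real (slp_size G) * real N" by simp
  then show "\<exists>G' :: (nat, 'a) slp2. is_slp1 G' \<and> derives G' [concat T]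
               \<and> real (slp_size G') \<le> 4 * real (slp_size G) * real N" using G' by blast
qed simp

end
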